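(* For every distributed theory $\mathcal T$ and every universally consistent distributed belief pair $\mathcal B$, $\tau_{\mathit{beliefpair}}(D^*_{\mathcal T}(\mathcal B))=D^*_{\tau_{\mathit{theory}}(\mathcal T)}(\tau_{\mathit{beliefpair}}(\mathcal B))$.
   Context: Standing setup (dAEL). $\Sigma=\Sigma_o\uplus\Sigma_s$ is a first-order vocabulary (objective and subjective symbols). A nonempty domain $D$ and a $\Sigma_o$-structure $I_o$ with domain $D$ are fixed, as is a set of agents $\mathcal{A}\subseteq D$. For each $A\in\mathcal{A}$ there is a constant $A\in\Sigma_o$ with $A^{I_o}=A$, and $\Sigma_o$ contains a unary predicate $\mathrm{Apred}$ with $\mathrm{Apred}^{I_o}=\mathcal{A}$. "Structure" means a $\Sigma$-structure with domain $D$ that agrees with $I_o$ on $\Sigma_o$. Formulas of dAEL are built from atoms $P(\bar t)$ ($P\in\Sigma$ or equality) using $\wedge,\neg,\forall x$, and the modal rule: if $\varphi$ is a formula and $t$ a term then $K_t\varphi$ is a formula. Truth values are $\mathbf t,\mathbf f,\mathbf u$ with truth order $\mathbf f<_t\mathbf u<_t\mathbf t$; $\mathbf t^{-1}=\mathbf f$, $\mathbf f^{-1}=\mathbf t$, $\mathbf u^{-1}=\mathbf u$. A possible world structure (PWS) is a set of structures. A distributed possible world structure (DPWS) is a family $\mathcal Q=(\mathcal Q_A)_{A\in\mathcal A}$ of PWSs. A distributed belief pair (DBP) is a pair $\mathcal B=(\mathcal B^c,\mathcal B^l)$ of DPWSs, consistent if $\mathcal B^l_A\subseteq\mathcal B^c_A$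 for all $A$ (DBPs are tacitly consistent). A DPWS $\mathcal Q$ is universally consistent if $\mathcal Q_A\ne\emptyset$ for all $A$; a DBP $\mathcal B$ is universally consistent if $\mathcal B^l$ is. Three-valued value $\varphi^{\mathcal B,I,a}$: atoms get their two-valued value in $I$; $\neg$ by ${}^{-1}$, $\wedge$ and $\forall$ by $\le_t$-glb (Kleene); $(K_t\varphi)^{\mathcal B,I,a}$ is $\mathbf t$ if $t^{I,a}\in\mathcal A$ and $\varphi^{\mathcal B,J,a}=\mathbf t$ for all $J\in\mathcal B^c_{t^{I,a}}$; $\mathbf f$ if $t^{I,a}\notin\mathcal A$ or $\varphi^{\mathcal B,J,a}=\mathbf f$ for some $J\in\mathcal B^l_{t^{I,a}}$; $\mathbf u$ otherwise; for sentences the assignment is omitted and the value of a set of sentences is the $\le_t$-glb of the members' values. A distributed theory is a family $\mathcal T=(\mathcal T_A)_{A\in\mathcal A}$ of sets of dAEL sentences; $D^*_{\mathcal T}(\mathcal B)=(D^c_{\mathcal T}(\mathcal B),D^l_{\mathcal T}(\mathcal B))$ with $D^c_{\mathcal T}(\mathcal B)_A=\{I:\mathcal T_A^{\mathcal B,I}\ne\mathbf f\}$ and $D^l_{\mathcal T}(\mathcal B)_A=\{I:\mathcal T_A^{\mathcal B,I}=\mathbf t\}$. Translation to AEL. $\Sigma'$ consists of all symbols of $\Sigma_o$ and all symbols of $\Sigma_s$ with arity increased by one. A fixed element $\delta\in D$ is chosen. A $\Sigma'$-structure always has domain $D$, agrees with $I_o$ on $\Sigma_o$, and is normal: for every $f\in\Sigma_s$,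 $f^J(\bar d,d)=\delta$ whenever $d\notin\mathcal A$, and for every relation $R\in\Sigma_s$, $(\bar d,d)\notin R^J$ whenever $d\notin\mathcal A$. AEL formulas over $\Sigma'$ are built like dAEL formulas but with a single unindexed modal operator $K$; an AEL belief pair is a pair $(P,S)$ of sets of $\Sigma'$-structures; the three-valued AEL value is defined like the dAEL one except that $(K\varphi)^{(P,S),J,a}$ is $\mathbf t$ if $\varphi$ has value $\mathbf t$ at all $J'\in P$, $\mathbf f$ if it has value $\mathbf f$ at some $J'\in S$, and $\mathbf u$ otherwise. For an AEL theory $T$, $D^*_T(P,S)=(\{J:T^{(P,S),J}\ne\mathbf f\},\{J:T^{(P,S),J}=\mathbf t\})$. For a $\Sigma$-term $t$ and $\Sigma'$-term $s$, $t_s$ is defined by $x_s=x$ for variables, $f(t_1,\dots,t_n)_s=f((t_1)_s,\dots,(t_n)_s,s)$ for $f\in\Sigma_s$, $f(t_1,\dots,t_n)_s=f((t_1)_s,\dots,(t_n)_s)$ for $f\in\Sigma_o$. $\tau_{\mathit{formula}}(s,\cdot)$: $P(t_1,\dots,t_n)\mapsto P((t_1)_s,\dots,(t_n)_s,s)$ if $P\in\Sigma_s$, $P((t_1)_s,\dots,(t_n)_s)$ if $P\in\Sigma_o$ or equality; commutes with $\neg,\wedge,\forall x$; $\tau_{\mathit{formula}}(s,K_t\phi)=\exists x(x=t_s\wedge\mathrm{Apred}(x)\wedge K\,\tau_{\mathit{formula}}(x,\phi))$ for a fresh variable $x$. $\tau_{\mathit{theory}}(\mathcal T)=\bigcup_{A\in\mathcal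 A}\{\tau_{\mathit{formula}}(A,\phi):\phi\in\mathcal T_A\}$. For a family $(I_A)_{A\in\mathcal A}$ of structures, $\tau_{\mathit{structure}}((I_A)_A)$ is the $\Sigma'$-structure interpreting $\Sigma_o$ as $I_o$, each $f\in\Sigma_s$ by $f(\bar d,d)=f^{I_d}(\bar d)$ if $d\in\mathcal A$ and $\delta$ otherwise, and each relation $R\in\Sigma_s$ by $(\bar d,d)\in R$ iff $d\in\mathcal A$ and $\bar d\in R^{I_d}$. $\tau_{\mathit{pws}}(\mathcal Q)=\{\tau_{\mathit{structure}}((I_A)_A): I_A\in\mathcal Q_A\text{ for all }A\in\mathcal A\}$, and $\tau_{\mathit{beliefpair}}(\mathcal B)=(\tau_{\mathit{pws}}(\mathcal B^c),\tau_{\mathit{pws}}(\mathcal B^l))$. *)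

theory Defs
  imports Main
begin

record ('f,'p,'d) dsetup =
  farity :: "'f \<Rightarrow> nat"
  parity :: "'p \<Rightarrow> nat"
  fsubj  :: "'f set"
  psubj  :: "'p set"
  iof    :: "'f \<Rightarrow> 'd list \<Rightarrow> 'd"
  iop    :: "'p \<Rightarrow> 'd list set"
  agents :: "'d set"
  agc    :: "'d \<Rightarrow> 'f"
  apred  :: "'p"
  delta  :: "'d"

definition wf_setup :: "('f,'p,'d) dsetup \<Rightarrow> bool" where
  "wf_setup S \<longleftrightarrow>
     (\<forall>p. \<forall>ds \<in> iop S p. length ds = parity S p) \<and>
     (\<forall>A \<in> agents S. farity S (agc S A) = 0 \<and> agc S A \<notin> fsubj S \<and> iof S (agc S A) [] = A) \<and>
     parity S (apred S) = 1 \<and> apred S \<notin> psubj S \<and>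
     iop S (apred S) = {[d] | d. d \<in> agents S}"

text \<open>Values on argument lists of the wrong length are
 fixed to undefined (so that structures correspond exactly to the mathematical ones).\<close>

record ('f,'p,'d) struc =
  fint :: "'f \<Rightarrow> 'd list \<Rightarrow> 'd"
  pint :: "'p \<Rightarrow> 'd list set"

definition arity_ok :: "('f \<Rightarrow> nat) \<Rightarrow> ('p \<Rightarrow> nat) \<Rightarrow> ('f,'p,'d) struc \<Rightarrow> bool" where
  "arity_ok fa pa I \<longleftrightarrow>
     (\<forall>f ds. length ds \<noteq> fa f \<longrightarrow> fint I f ds = undefined) \<and>
     (\<forall>p. \<forall>ds \<in> pint I p. length ds = pa p)"

definition is_struct :: "('f,'p,'d) dsetup \<Rightarrow> ('f,'p,'d) struc \<Rightarrow> bool" where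
  "is_struct S I \<longleftrightarrow> arity_ok (farity S) (parity S) I \<and>
     (\<forall>f. f \<notin> fsubj S \<longrightarrow> (\<forall>ds. length ds = farity S f \<longrightarrow> fint I f ds = iof S f ds)) \<and>
     (\<forall>p. p \<notin> psubj S \<longrightarrow> pint I p = iop S p)"

definition farity' :: "('f,'p,'d) dsetup \<Rightarrow> 'f \<Rightarrow> nat" where
  "farity' S f = farity S f + (if f \<in> fsubj S then 1 else 0)"

definition parity' :: "('f,'p,'d) dsetup \<Rightarrow> 'p \<Rightarrow> nat" where
  "parity' S p = parity S p + (if p \<in> psubj S then 1 else 0)"

definition is_struct' :: "('f,'p,'d) dsetup \<Rightarrow> ('f,'p,'d) struc \<Rightarrow> bool" where
  "is_struct' S J \<longleftrightarrow> arity_ok (farity' S) (parity' S) J \<and>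
     (\<forall>f. f \<notin> fsubj S \<longrightarrow> (\<forall>ds. length ds = farity S f \<longrightarrow> fint J f ds = iof S f ds)) \<and>
     (\<forall>p. p \<notin> psubj S \<longrightarrow> pint J p = iop S p) \<and>
     (\<forall>f \<in> fsubj S. \<forall>ds d. length ds = farity S f \<longrightarrow> d \<notin> agents S \<longrightarrow>
         fint J f (ds @ [d]) = delta S) \<and>
     (\<forall>p \<in> psubj S. \<forall>ds d. d \<notin> agents S \<longrightarrow> ds @ [d] \<notin> pint J p)"

type_synonym ('f,'p,'d) pws = "('f,'p,'d) struc set"
type_synonym ('f,'p,'d) dpws = "'d \<Rightarrow> ('f,'p,'d) pws"
type_synonym ('f,'p,'d) dbp = "('f,'p,'d) dpws \<times> ('f,'p,'d) dpws"
type_synonym ('f,'p,'d) abp = "('f,'p,'d) pws \<times> ('f,'p,'d) pws"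

definition is_dbp :: "('f,'p,'d) dsetup \<Rightarrow> ('f,'p,'d) dbp \<Rightarrow> bool" where
  "is_dbp S B \<longleftrightarrow> (\<forall>A \<in> agents S. fst B A \<subseteq> {I. is_struct S I} \<and> snd B A \<subseteq> {I. is_struct S I})"

definition consistent_dbp :: "('f,'p,'d) dsetup \<Rightarrow> ('f,'p,'d) dbp \<Rightarrow> bool" where
  "consistent_dbp S B \<longleftrightarrow> (\<forall>A \<in> agents S. snd B A \<subseteq> fst B A)"

definition univ_consistent_dpws :: "('f,'p,'d) dsetup \<Rightarrow> ('f,'p,'d) dpws \<Rightarrow> bool" where
  "univ_consistent_dpws S Q \<longleftrightarrow> (\<forall>A \<in> agents S. Q A \<noteq> {})"

definition univ_consistent_dbp :: "('f,'p,'d) dsetup \<Rightarrow> ('f,'p,'d) dbp \<Rightarrow> bool" where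
  "univ_consistent_dbp S B \<longleftrightarrow> univ_consistent_dpws S (snd B)"

datatype 'f trm = Var nat | Fn 'f "'f trm list"

datatype ('f,'p) dform =
    DAtom 'p "'f trm list"
  | DEq "'f trm" "'f trm"
  | DNeg "('f,'p) dform"
  | DConj "('f,'p) dform" "('f,'p) dform"
  | DAll nat "('f,'p) dform"
  | DK "'f trm" "('f,'p) dform"

datatype ('f,'p) aform =
    AAtom 'p "'f trm list"
  | AEq "'f trm" "'f trm"
  | ANeg "('f,'p) aform"
  | AConj "('f,'p) aform" "('f,'p) aform"
  | AAll nat "('f,'p) aform"
  | AK "('f,'p) aform"

definition AEx :: "nat \<Rightarrow> ('f,'p) aform \<Rightarrow> ('f,'p) aform" where
  "AEx x \<psi> = ANeg (AAll x (ANeg \<psi>))"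

fun tvars :: "'f trm \<Rightarrow> nat set" where
  "tvars (Var x) = {x}"
| "tvars (Fn f ts) = (\<Union>t \<in> set ts. tvars t)"

primrec dvars :: "('f,'p) dform \<Rightarrow> nat set" where
  "dvars (DAtom p ts) = (\<Union>t \<in> set ts. tvars t)"
| "dvars (DEq t u) = tvars t \<union> tvars u"
| "dvars (DNeg \<phi>) = dvars \<phi>"
| "dvars (DConj \<phi> \<psi>) = dvars \<phi> \<union> dvars \<psi>"
| "dvars (DAll x \<phi>) = insert x (dvars \<phi>)"
| "dvars (DK t \<phi>) = tvars t \<union> dvars \<phi>"

primrec dfv :: "('f,'p) dform \<Rightarrow> nat set" where
  "dfv (DAtom p ts) = (\<Union>t \<in> set ts. tvars t)"
| "dfv (DEq t u) = tvars t \<union> tvars u"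
| "dfv (DNeg \<phi>) = dfv \<phi>"
| "dfv (DConj \<phi> \<psi>) = dfv \<phi> \<union> dfv \<psi>"
| "dfv (DAll x \<phi>) = dfv \<phi> - {x}"
| "dfv (DK t \<phi>) = tvars t \<union> dfv \<phi>"

fun wf_trm :: "('f \<Rightarrow> nat) \<Rightarrow> 'f trm \<Rightarrow> bool" where
  "wf_trm fa (Var x) = True"
| "wf_trm fa (Fn f ts) = (length ts = fa f \<and> (\<forall>t \<in> set ts. wf_trm fa t))"

primrec wf_dform :: "('f,'p,'d) dsetup \<Rightarrow> ('f,'p) dform \<Rightarrow> bool" where
  "wf_dform S (DAtom p ts) = (length ts = parity S p \<and> (\<forall>t \<in> set ts. wf_trm (farity S) t))"
| "wf_dform S (DEq t u) = (wf_trm (farity S) t \<and> wf_trm (farity S) u)"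
| "wf_dform S (DNeg \<phi>) = wf_dform S \<phi>"
| "wf_dform S (DConj \<phi> \<psi>) = (wf_dform S \<phi> \<and> wf_dform S \<psi>)"
| "wf_dform S (DAll x \<phi>) = wf_dform S \<phi>"
| "wf_dform S (DK t \<phi>) = (wf_trm (farity S) t \<and> wf_dform S \<phi>)"

definition dsentence :: "('f,'p,'d) dsetup \<Rightarrow> ('f,'p) dform \<Rightarrow> bool" where
  "dsentence S \<phi> \<longleftrightarrow> wf_dform S \<phi> \<and> dfv \<phi> = {}"

definition dist_theory :: "('f,'p,'d) dsetup \<Rightarrow> ('d \<Rightarrow> ('f,'p) dform set) \<Rightarrow> bool" where
  "dist_theory S T \<longleftrightarrow> (\<forall>A \<in> agents S. \<forall>\<phi> \<in> T A. dsentence S \<phi>)"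

datatype tv = TT | FF | UU

primrec tinv :: "tv \<Rightarrow> tv" where
  "tinv TT = FF" | "tinv FF = TT" | "tinv UU = UU"

text \<open>Greatest lower bound w.r.t. the truth order f < u < t (glb of the empty set is t).\<close>
definition glb :: "tv set \<Rightarrow> tv" where
  "glb X = (if FF \<in> X then FF else if UU \<in> X then UU else TT)"

fun teval :: "('f,'p,'d) struc \<Rightarrow> (nat \<Rightarrow> 'd) \<Rightarrow> 'f trm \<Rightarrow> 'd" where
  "teval I a (Var x) = a x"
| "teval I a (Fn f ts) = fint I f (map (teval I a) ts)"

primrec dval :: "('f,'p,'d) dsetup \<Rightarrow> ('f,'p,'d) dbp \<Rightarrow> ('f,'p,'d) struc \<Rightarrow> (nat \<Rightarrow> 'd)
                   \<Rightarrow> ('f,'p) dform \<Rightarrow> tv" where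
  "dval S B I a (DAtom p ts) = (if map (teval I a) ts \<in> pint I p then TT else FF)"
| "dval S B I a (DEq t u) = (if teval I a t = teval I a u then TT else FF)"
| "dval S B I a (DNeg \<phi>) = tinv (dval S B I a \<phi>)"
| "dval S B I a (DConj \<phi> \<psi>) = glb {dval S B I a \<phi>, dval S B I a \<psi>}"
| "dval S B I a (DAll x \<phi>) = glb ((\<lambda>d. dval S B I (a(x := d)) \<phi>) ` UNIV)"
| "dval S B I a (DK t \<phi>) =
     (let A = teval I a t in
      if A \<in> agents S \<and> (\<forall>J \<in> fst B A. dval S B J a \<phi> = TT) then TT
      else if A \<notin> agents S \<or> (\<exists>J \<in> snd B A. dval S B J a \<phi> = FF) then FF
      else UU)"

definition dsval :: "('f,'p,'d) dsetup \<Rightarrow> ('f,'p,'d) dbp \<Rightarrow> ('f,'p,'d) struc \<Rightarrow> ('f,'p) dform \<Rightarrow> tv" where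
  "dsval S B I \<phi> = dval S B I (\<lambda>_. undefined) \<phi>"

definition dtval :: "('f,'p,'d) dsetup \<Rightarrow> ('f,'p,'d) dbp \<Rightarrow> ('f,'p,'d) struc \<Rightarrow> ('f,'p) dform set \<Rightarrow> tv" where
  "dtval S B I Th = glb (dsval S B I ` Th)"

definition Dstar :: "('f,'p,'d) dsetup \<Rightarrow> ('d \<Rightarrow> ('f,'p) dform set) \<Rightarrow> ('f,'p,'d) dbp \<Rightarrow> ('f,'p,'d) dbp" where
  "Dstar S T B = ((\<lambda>A. {I. is_struct S I \<and> dtval S B I (T A) \<noteq> FF}),
                  (\<lambda>A. {I. is_struct S I \<and> dtval S B I (T A) = TT}))"

primrec aval :: "('f,'p,'d) abp \<Rightarrow> ('f,'p,'d) struc \<Rightarrow> (nat \<Rightarrow> 'd) \<Rightarrow> ('f,'p) aform \<Rightarrow> tv" where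
  "aval PS J a (AAtom p ts) = (if map (teval J a) ts \<in> pint J p then TT else FF)"
| "aval PS J a (AEq t u) = (if teval J a t = teval J a u then TT else FF)"
| "aval PS J a (ANeg \<phi>) = tinv (aval PS J a \<phi>)"
| "aval PS J a (AConj \<phi> \<psi>) = glb {aval PS J a \<phi>, aval PS J a \<psi>}"
| "aval PS J a (AAll x \<phi>) = glb ((\<lambda>d. aval PS J (a(x := d)) \<phi>) ` UNIV)"
| "aval PS J a (AK \<phi>) =
     (if (\<forall>J' \<in> fst PS. aval PS J' a \<phi> = TT) then TT
      else if (\<exists>J' \<in> snd PS. aval PS J' a \<phi> = FF) then FF
      else UU)"

definition asval :: "('f,'p,'d) abp \<Rightarrow> ('f,'p,'d) struc \<Rightarrow> ('f,'p) aform \<Rightarrow> tv" where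
  "asval PS J \<phi> = aval PS J (\<lambda>_. undefined) \<phi>"

definition atval :: "('f,'p,'d) abp \<Rightarrow> ('f,'p,'d) struc \<Rightarrow> ('f,'p) aform set \<Rightarrow> tv" where
  "atval PS J Th = glb (asval PS J ` Th)"

definition Astar :: "('f,'p,'d) dsetup \<Rightarrow> ('f,'p) aform set \<Rightarrow> ('f,'p,'d) abp \<Rightarrow> ('f,'p,'d) abp" where
  "Astar S Th PS = ({J. is_struct' S J \<and> atval PS J Th \<noteq> FF},
                    {J. is_struct' S J \<and> atval PS J Th = TT})"

fun tr_term :: "('f,'p,'d) dsetup \<Rightarrow> 'f trm \<Rightarrow> 'f trm \<Rightarrow> 'f trm" where
  "tr_term S s (Var x) = Var x"
| "tr_term S s (Fn f ts) = Fn f (map (tr_term S s) ts @ (if f \<in> fsubj S then [s] else []))"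

definition fresh :: "nat set \<Rightarrow> nat" where
  "fresh V = Suc (Max (insert 0 V))"

primrec tr_form :: "('f,'p,'d) dsetup \<Rightarrow> 'f trm \<Rightarrow> ('f,'p) dform \<Rightarrow> ('f,'p) aform" where
  "tr_form S s (DAtom p ts) = AAtom p (map (tr_term S s) ts @ (if p \<in> psubj S then [s] else []))"
| "tr_form S s (DEq t u) = AEq (tr_term S s t) (tr_term S s u)"
| "tr_form S s (DNeg \<phi>) = ANeg (tr_form S s \<phi>)"
| "tr_form S s (DConj \<phi> \<psi>) = AConj (tr_form S s \<phi>) (tr_form S s \<psi>)"
| "tr_form S s (DAll x \<phi>) = AAll x (tr_form S s \<phi>)"
| "tr_form S s (DK t \<phi>) =
     (let x = fresh (tvars s \<union> tvars t \<union> dvars \<phi>) in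
      AEx x (AConj (AEq (Var x) (tr_term S s t))
                   (AConj (AAtom (apred S) [Var x]) (AK (tr_form S (Var x) \<phi>)))))"

definition tr_theory :: "('f,'p,'d) dsetup \<Rightarrow> ('d \<Rightarrow> ('f,'p) dform set) \<Rightarrow> ('f,'p) aform set" where
  "tr_theory S T = (\<Union>A \<in> agents S. tr_form S (Fn (agc S A) []) ` T A)"

definition tr_structure :: "('f,'p,'d) dsetup \<Rightarrow> ('d \<Rightarrow> ('f,'p,'d) struc) \<Rightarrow> ('f,'p,'d) struc" where
  "tr_structure S I =
     \<lparr> fint = (\<lambda>f ds.
          if f \<in> fsubj S then
            (if length ds = farity S f + 1 then
               (if last ds \<in> agents S then fint (I (last ds)) f (butlast ds) else delta S)
             else undefined)
          else (if length ds = farity S f then iof S f ds else undefined)),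
       pint = (\<lambda>p.
          if p \<in> psubj S then
            {ds. length ds = parity S p + 1 \<and> last ds \<in> agents S \<and> butlast ds \<in> pint (I (last ds)) p}
          else iop S p) \<rparr>"

definition tr_pws :: "('f,'p,'d) dsetup \<Rightarrow> ('f,'p,'d) dpws \<Rightarrow> ('f,'p,'d) pws" where
  "tr_pws S Q = {tr_structure S I | I. \<forall>A \<in> agents S. I A \<in> Q A}"

definition tr_bp :: "('f,'p,'d) dsetup \<Rightarrow> ('f,'p,'d) dbp \<Rightarrow> ('f,'p,'d) abp" where
  "tr_bp S B = (tr_pws S (fst B), tr_pws S (snd B))"

end

theory Submission
  imports Defs
begin

lemma fint_tr: "fint (tr_structure S I) f ds =
   (if f \<in> fsubj S then
      (if length ds = farity S f + 1 then
         (if last ds \<in> agents S then fint (I (last ds)) f (butlast ds) else delta S)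
       else undefined)
    else (if length ds = farity S f then iof S f ds else undefined))"
  by (simp add: tr_structure_def)

lemma pint_tr: "pint (tr_structure S I) p =
   (if p \<in> psubj S then
      {ds. length ds = parity S p + 1 \<and> last ds \<in> agents S \<and> butlast ds \<in> pint (I (last ds)) p}
    else iop S p)"
  by (simp add: tr_structure_def)

definition untr :: "('f,'p,'d) dsetup \<Rightarrow> ('f,'p,'d) struc \<Rightarrow> 'd \<Rightarrow> ('f,'p,'d) struc" where
  "untr S J A = \<lparr> fint = (\<lambda>f ds. if f \<in> fsubj S then (if length ds = farity S f then fint J f (ds @ [A]) else undefined) else fint J f ds),
                  pint = (\<lambda>p. if p \<in> psubj S then {ds. ds @ [A] \<in> pint J p} else pint J p) \<rparr>"

lemma is_struct'_tr:
  assumes "wf_setup S" shows "is_struct' S (tr_structure S I)"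
  using assms by (auto simp: is_struct'_def arity_ok_def fint_tr pint_tr farity'_def parity'_def wf_setup_def)

lemma is_struct_untr:
  assumes "is_struct' S J" shows "is_struct S (untr S J A)"
proof -
  have a: "arity_ok (farity' S) (parity' S) J" and o: "\<forall>p. p \<notin> psubj S \<longrightarrow> pint J p = iop S p"
    and of: "\<forall>f. f \<notin> fsubj S \<longrightarrow> (\<forall>ds. length ds = farity S f \<longrightarrow> fint J f ds = iof S f ds)"
    using assms by (auto simp: is_struct'_def)
  have p1: "\<forall>p. p \<notin> psubj S \<longrightarrow> (\<forall>ds\<in>pint J p. length ds = parity S p)"
    using a by (auto simp: arity_ok_def parity'_def)
  have p2: "\<forall>p. p \<in> psubj S \<longrightarrow> (\<forall>ds. ds @ [A] \<in> pint J p \<longrightarrow> length ds = parity S p)"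
  proof (intro allI impI)
    fix p ds assume "p \<in> psubj S" "ds @ [A] \<in> pint J p"
    then have "length (ds @ [A]) = parity S p + 1" using a unfolding arity_ok_def parity'_def by fastforce
    then show "length ds = parity S p" by simp
  qed
  have f1: "\<forall>f ds. f \<notin> fsubj S \<longrightarrow> length ds \<noteq> farity S f \<longrightarrow> fint J f ds = undefined"
    using a by (auto simp: arity_ok_def farity'_def)
  have "arity_ok (farity S) (parity S) (untr S J A)"
    unfolding arity_ok_def untr_def using p1 p2 f1 by simp
  moreover have "\<forall>f. f \<notin> fsubj S \<longrightarrow> (\<forall>ds. length ds = farity S f \<longrightarrow> fint (untr S J A) f ds = iof S f ds)"
    using of by (simp add: untr_def)
  moreover have "\<forall>p. p \<notin> psubj S \<longrightarrow> pint (untr S J A) p = iop S p"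
    using o by (simp add: untr_def)
  ultimately show ?thesis unfolding is_struct_def by (intro conjI)
qed

lemma tr_untr:
  assumes "is_struct' S J" shows "tr_structure S (untr S J) = J"
proof (rule struc.equality)
  show "fint (tr_structure S (untr S J)) = fint J"
  proof (intro ext)
    fix f ds
    show "fint (tr_structure S (untr S J)) f ds = fint J f ds"
    proof (cases "f \<in> fsubj S")
      case True
      show ?thesis
      proof (cases "length ds = farity S f + 1")
        case L: True
        then have ds: "ds = butlast ds @ [last ds]"
          by (metis append_butlast_last_id add_is_0 list.size(3) one_neq_zero)
        have lb: "length (butlast ds) = farity S f" using L by simp
        show ?thesis
        proof (cases "last ds \<in> agents S")
          case True
          then show ?thesis using \<open>f \<in> fsubj S\<close> L lb
            by (simp add: fint_tr untr_def flip: ds)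
        next
          case False
          have "fint J f (butlast ds @ [last ds]) = delta S"
            using \<open>f \<in> fsubj S\<close> lb assms False unfolding is_struct'_def by blast
          then show ?thesis using \<open>f \<in> fsubj S\<close> L False
            by (simp add: fint_tr flip: ds)
        qed
      next
        case False
        then show ?thesis using True assms
          by (simp add: fint_tr is_struct'_def arity_ok_def farity'_def)
      qed
    next
      case False
      then show ?thesis using assms
        by (simp add: fint_tr is_struct'_def arity_ok_def farity'_def)
    qed
  qed
next
  show "pint (tr_structure S (untr S J)) = pint J"
  proof (intro ext)
    fix p
    show "pint (tr_structure S (untr S J)) p = pint J p"
    proof (cases "p \<in> psubj S")
      case True
      have iff: "ds \<in> pint J p \<longleftrightarrow> length ds = parity S p + 1 \<and> last ds \<in> agents S \<and> butlast ds @ [last ds] \<in> pint J p" for ds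
      proof
        assume d: "ds \<in> pint J p"
        then have len: "length ds = parity S p + 1" using assms True
          by (auto simp: is_struct'_def arity_ok_def parity'_def)
        then have ds: "ds = butlast ds @ [last ds]"
          by (metis append_butlast_last_id add_is_0 list.size(3) one_neq_zero)
        have "last ds \<in> agents S"
          using assms True d ds unfolding is_struct'_def by metis
        then show "length ds = parity S p + 1 \<and> last ds \<in> agents S \<and> butlast ds @ [last ds] \<in> pint J p"
          using len d ds by simp
      next
        assume "length ds = parity S p + 1 \<and> last ds \<in> agents S \<and> butlast ds @ [last ds] \<in> pint J p"
        then show "ds \<in> pint J p"
          by (metis append_butlast_last_id add_is_0 list.size(3) one_neq_zero)
      qed
      have "pint (tr_structure S (untr S J)) p = {ds. length ds = parity S p + 1 \<and> last ds \<in> agents S \<and> butlast ds @ [last ds] \<in> pint J p}"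
        using True by (simp add: pint_tr untr_def)
      also have "\<dots> = pint J p" using iff by blast
      finally show ?thesis .
    next
      case False
      then show ?thesis using assms by (simp add: pint_tr untr_def is_struct'_def)
    qed
  qed
next
  show "struc.more (tr_structure S (untr S J)) = struc.more J" by simp
qed

lemma untr_tr:
  assumes "is_struct S (I A)" "A \<in> agents S"
  shows "untr S (tr_structure S I) A = I A"
proof (rule struc.equality)
  show "fint (untr S (tr_structure S I) A) = fint (I A)"
    using assms by (intro ext) (auto simp: untr_def fint_tr is_struct_def arity_ok_def)
  show "pint (untr S (tr_structure S I) A) = pint (I A)"
    using assms by (intro ext) (auto simp: untr_def pint_tr is_struct_def arity_ok_def)
qed simp

lemma tr_pws_char:
  assumes "wf_setup S"
  shows "tr_pws S (\<lambda>A. {I. is_struct S I \<and> P A I}) =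
         {J. is_struct' S J \<and> (\<forall>A\<in>agents S. P A (untr S J A))}"
proof
  show "tr_pws S (\<lambda>A. {I. is_struct S I \<and> P A I}) \<subseteq> {J. is_struct' S J \<and> (\<forall>A\<in>agents S. P A (untr S J A))}"
    using assms by (auto simp: tr_pws_def is_struct'_tr untr_tr)
next
  show "{J. is_struct' S J \<and> (\<forall>A\<in>agents S. P A (untr S J A))} \<subseteq> tr_pws S (\<lambda>A. {I. is_struct S I \<and> P A I})"
  proof
    fix J assume J: "J \<in> {J. is_struct' S J \<and> (\<forall>A\<in>agents S. P A (untr S J A))}"
    then have "J = tr_structure S (untr S J)" using tr_untr[of S J] by auto
    moreover have "\<forall>A\<in>agents S. untr S J A \<in> {I. is_struct S I \<and> P A I}"
      using J is_struct_untr by auto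
    ultimately show "J \<in> tr_pws S (\<lambda>A. {I. is_struct S I \<and> P A I})"
      unfolding tr_pws_def by blast
  qed
qed


lemma finite_tvars: "finite (tvars t)"
  by (induction t) auto

lemma finite_dvars: "finite (dvars \<phi>)"
  by (induction \<phi>) (auto simp: finite_tvars)

lemma fresh_notin: "finite V \<Longrightarrow> fresh V \<notin> V"
proof
  assume f: "finite V" and m: "fresh V \<in> V"
  have "fresh V \<le> Max (insert 0 V)" using f m by (intro Max_ge) auto
  then show False by (simp add: fresh_def)
qed

lemma tvars_tr_term: "tvars (tr_term S s t) \<subseteq> tvars s \<union> tvars t"
  by (induction t) auto

lemma teval_cong: "\<forall>v\<in>tvars t. a v = b v \<Longrightarrow> teval I a t = teval I b t"
proof (induction t)
  case (Fn f ts)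
  then have "map (teval I a) ts = map (teval I b) ts" by auto
  then show ?case by (metis teval.simps(2))
qed simp

lemma dval_cong: "\<forall>v\<in>dvars \<phi>. a v = b v \<Longrightarrow> dval S B I a \<phi> = dval S B I b \<phi>"
proof (induction \<phi> arbitrary: I a b)
  case (DAtom p ts)
  have "\<forall>t\<in>set ts. teval I a t = teval I b t" using DAtom.prems by (auto intro: teval_cong)
  then have m: "map (teval I a) ts = map (teval I b) ts" by simp
  show ?case by (simp only: dval.simps m)
next
  case (DEq t u)
  then show ?case using teval_cong[of t a b I] teval_cong[of u a b I] by simp
next
  case (DAll x \<phi>)
  have e: "(\<lambda>d. dval S B I (a(x := d)) \<phi>) = (\<lambda>d. dval S B I (b(x := d)) \<phi>)"
    using DAll by (intro ext) (rule DAll.IH, auto)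
  show ?case by (simp only: dval.simps e)
next
  case (DK t \<phi>)
  have t: "teval I a t = teval I b t" using DK.prems by (auto intro: teval_cong)
  have "\<And>J. dval S B J a \<phi> = dval S B J b \<phi>" using DK by auto
  then show ?case using t by (simp add: Let_def)
next
  case (DNeg \<phi>)
  have "dval S B I a \<phi> = dval S B I b \<phi>" using DNeg.prems by (intro DNeg.IH) auto
  then show ?case by simp
next
  case (DConj \<phi>1 \<phi>2)
  have "dval S B I a \<phi>1 = dval S B I b \<phi>1" using DConj.prems by (intro DConj.IH) auto
  moreover have "dval S B I a \<phi>2 = dval S B I b \<phi>2" using DConj.prems by (intro DConj.IH) auto
  ultimately show ?case by simp
qed

lemma glb_FF: "glb X = FF \<longleftrightarrow> FF \<in> X"
  by (simp add: glb_def)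

lemma glb_TT: "glb X = TT \<longleftrightarrow> X \<subseteq> {TT}"
proof -
  have e: "x = TT \<longleftrightarrow> x \<noteq> FF \<and> x \<noteq> UU" for x by (cases x) auto
  have "X \<subseteq> {TT} \<longleftrightarrow> FF \<notin> X \<and> UU \<notin> X" using e by blast
  then show ?thesis by (simp add: glb_def)
qed

lemma glb2: "glb {TT, v} = v" "glb {FF, v} = FF"
  by (cases v; simp add: glb_def)+

lemma lub_single: "tinv (glb ((\<lambda>d. tinv (if d = c then v else FF)) ` UNIV)) = v"
proof -
  have "(\<lambda>d. tinv (if d = c then v else FF)) ` UNIV \<subseteq> {TT, tinv v}" by auto
  moreover have "tinv v \<in> (\<lambda>d. tinv (if d = c then v else FF)) ` UNIV" by (rule image_eqI[of _ _ c]) auto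
  ultimately show ?thesis by (cases v) (auto simp: glb_def)
qed

lemma lub_none: "tinv (glb ((\<lambda>d. tinv FF) ` UNIV)) = FF"
  by (simp add: glb_def)

lemma teval_tr:
  assumes "is_struct S (I A)" "A \<in> agents S" "teval (tr_structure S I) a s = A"
  shows "teval (tr_structure S I) a (tr_term S s t) = teval (I A) a t"
proof (induction t)
  case (Var x)
  then show ?case by simp
next
  case (Fn f ts)
  have IH: "map (teval (tr_structure S I) a) (map (tr_term S s) ts) = map (teval (I A) a) ts"
    using Fn by auto
  have ar: "\<And>ds. length ds \<noteq> farity S f \<Longrightarrow> fint (I A) f ds = undefined"
    using assms(1) by (auto simp: is_struct_def arity_ok_def)
  show ?case
  proof (cases "f \<in> fsubj S")
    case True
    have "teval (tr_structure S I) a (tr_term S s (Fn f ts)) = fint (tr_structure S I) f (map (teval (I A) a) ts @ [A])"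
      using True by (simp only: tr_term.simps teval.simps if_True map_append list.map IH assms(3))
    also have "\<dots> = fint (I A) f (map (teval (I A) a) ts)"
      using True assms(2) ar by (auto simp: fint_tr)
    finally show ?thesis by simp
  next
    case False
    have "teval (tr_structure S I) a (tr_term S s (Fn f ts)) = fint (tr_structure S I) f (map (teval (I A) a) ts)"
      using False by (simp only: tr_term.simps teval.simps if_False append_Nil2 IH)
    also have "\<dots> = fint (I A) f (map (teval (I A) a) ts)"
      using False assms(1) ar by (auto simp: fint_tr is_struct_def)
    finally show ?thesis by simp
  qed
qed

lemma teval_tr_map:
  assumes "is_struct S (I A)" "A \<in> agents S" "teval (tr_structure S I) a s = A"
  shows "map (teval (tr_structure S I) a) (map (tr_term S s) ts) = map (teval (I A) a) ts"
  using teval_tr[OF assms] by simp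

lemma tr_pws_image:
  assumes ne: "\<forall>A\<in>agents S. Q A \<noteq> {}" and A': "A' \<in> agents S"
    and gh: "\<And>I'. \<forall>A\<in>agents S. I' A \<in> Q A \<Longrightarrow> g (tr_structure S I') = h (I' A')"
  shows "g ` tr_pws S Q = h ` Q A'"
proof
  show "g ` tr_pws S Q \<subseteq> h ` Q A'"
    using gh A' by (auto simp: tr_pws_def)
next
  show "h ` Q A' \<subseteq> g ` tr_pws S Q"
  proof
    fix v assume "v \<in> h ` Q A'"
    then obtain K where K: "K \<in> Q A'" "v = h K" by auto
    define I' where "I' = (\<lambda>A. if A = A' then K else (SOME y. y \<in> Q A))"
    have I': "\<forall>A\<in>agents S. I' A \<in> Q A"
      using ne K by (auto simp: I'_def some_in_eq)
    then have "tr_structure S I' \<in> tr_pws S Q" by (auto simp: tr_pws_def)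
    moreover have "v = g (tr_structure S I')" using gh[OF I'] K by (simp add: I'_def)
    ultimately show "v \<in> g ` tr_pws S Q" by blast
  qed
qed


lemma main:
  assumes wf: "wf_setup S"
    and ne1: "\<forall>A\<in>agents S. fst B A \<noteq> {}" and ne2: "\<forall>A\<in>agents S. snd B A \<noteq> {}"
    and st1: "\<forall>A\<in>agents S. \<forall>K\<in>fst B A. is_struct S K"
    and st2: "\<forall>A\<in>agents S. \<forall>K\<in>snd B A. is_struct S K"
  shows "\<lbrakk>\<forall>A\<in>agents S. is_struct S (I A); A \<in> agents S; teval (tr_structure S I) a s = A;
          tvars s \<inter> dvars \<phi> = {}\<rbrakk> \<Longrightarrow>
         aval (tr_bp S B) (tr_structure S I) a (tr_form S s \<phi>) = dval S B (I A) a \<phi>"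
proof (induction \<phi> arbitrary: I A a s)
  case (DAtom p ts)
  have st: "is_struct S (I A)" using DAtom.prems by auto
  have m: "map (teval (tr_structure S I) a) (map (tr_term S s) ts) = map (teval (I A) a) ts"
    using teval_tr_map[OF st DAtom.prems(2,3)] .
  show ?case
  proof (cases "p \<in> psubj S")
    case True
    have e: "(map (teval (I A) a) ts @ [A] \<in> pint (tr_structure S I) p) = (map (teval (I A) a) ts \<in> pint (I A) p)"
    proof -
      have ar: "ds \<in> pint (I A) p \<Longrightarrow> length ds = parity S p" for ds
        using st unfolding is_struct_def arity_ok_def by blast
      show ?thesis using True DAtom.prems(2) ar[of "map (teval (I A) a) ts"] by (auto simp: pint_tr)
    qed
    show ?thesis
      by (simp only: tr_form.simps aval.simps dval.simps True if_True map_append list.map m DAtom.prems(3) e)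
  next
    case False
    have e: "pint (tr_structure S I) p = pint (I A) p"
      using False st by (simp add: pint_tr is_struct_def)
    show ?thesis
      by (simp only: tr_form.simps aval.simps dval.simps False if_False append_Nil2 m e)
  qed
next
  case (DEq t u)
  have st: "is_struct S (I A)" using DEq.prems by auto
  show ?case using teval_tr[OF st DEq.prems(2,3)] by simp
next
  case (DNeg \<phi>)
  have "aval (tr_bp S B) (tr_structure S I) a (tr_form S s \<phi>) = dval S B (I A) a \<phi>"
    using DNeg.prems by (intro DNeg.IH) auto
  then show ?case by simp
next
  case (DConj \<phi>1 \<phi>2)
  have "aval (tr_bp S B) (tr_structure S I) a (tr_form S s \<phi>1) = dval S B (I A) a \<phi>1"
    using DConj.prems by (intro DConj.IH) auto
  moreover have "aval (tr_bp S B) (tr_structure S I) a (tr_form S s \<phi>2) = dval S B (I A) a \<phi>2"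
    using DConj.prems by (intro DConj.IH) auto
  ultimately show ?case by simp
next
  case (DAll x \<phi>)
  have xs: "x \<notin> tvars s" using DAll.prems(4) by auto
  have e: "(\<lambda>d. aval (tr_bp S B) (tr_structure S I) (a(x:=d)) (tr_form S s \<phi>)) = (\<lambda>d. dval S B (I A) (a(x:=d)) \<phi>)"
  proof
    fix d
    have "teval (tr_structure S I) (a(x:=d)) s = teval (tr_structure S I) a s"
      using xs by (intro teval_cong) auto
    then have t: "teval (tr_structure S I) (a(x:=d)) s = A" using DAll.prems(3) by simp
    show "aval (tr_bp S B) (tr_structure S I) (a(x:=d)) (tr_form S s \<phi>) = dval S B (I A) (a(x:=d)) \<phi>"
    proof -
      have d4: "tvars s \<inter> dvars \<phi> = {}" using DAll.prems(4) by auto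
      show ?thesis using DAll.IH[of I A "a(x:=d)" s, OF DAll.prems(1,2) t d4] .
    qed
  qed
  show ?case by (simp only: tr_form.simps aval.simps dval.simps e)
next
  case (DK t \<phi>)
  define J where "J = tr_structure S I"
  define PS where "PS = tr_bp S B"
  define x where "x = fresh (tvars s \<union> tvars t \<union> dvars \<phi>)"
  have xn: "x \<notin> tvars s \<union> tvars t \<union> dvars \<phi>"
    unfolding x_def by (rule fresh_notin) (simp add: finite_tvars finite_dvars)
  define A' where "A' = teval (I A) a t"
  define \<chi> where "\<chi> = tr_form S (Var x) \<phi>"
  have st: "is_struct S (I A)" using DK.prems by auto
  have teq: "teval J (a(x:=d)) (tr_term S s t) = A'" for d
  proof -
    have "teval J (a(x:=d)) (tr_term S s t) = teval J a (tr_term S s t)"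
      using xn tvars_tr_term[of S s t] by (intro teval_cong) auto
    also have "\<dots> = A'" unfolding A'_def J_def using teval_tr[OF st DK.prems(2,3)] .
    finally show ?thesis .
  qed
  have ap: "pint J (apred S) = {[d] | d. d \<in> agents S}"
    using wf unfolding wf_setup_def J_def by (simp add: pint_tr)
  define KV where "KV = aval PS J (a(x:=A')) (AK \<chi>)"
  define \<psi> where "\<psi> = AConj (AEq (Var x) (tr_term S s t)) (AConj (AAtom (apred S) [Var x]) (AK \<chi>))"
  have val: "aval PS J (a(x:=d)) \<psi> = (if d = A' then (if A' \<in> agents S then KV else FF) else FF)" for d
    by (cases "d = A'") (auto simp: \<psi>_def teq ap glb2 KV_def)
  have tr: "tr_form S s (DK t \<phi>) = AEx x \<psi>"
    by (simp add: x_def \<chi>_def \<psi>_def Let_def)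
  have lhs: "aval PS J a (tr_form S s (DK t \<phi>)) = (if A' \<in> agents S then KV else FF)"
  proof (cases "A' \<in> agents S")
    case True
    have e: "(\<lambda>d. tinv (aval PS J (a(x:=d)) \<psi>)) = (\<lambda>d. tinv (if d = A' then KV else FF))"
      using True by (simp add: val)
    show ?thesis using True unfolding tr AEx_def by (simp only: aval.simps e lub_single if_True)
  next
    case False
    have e: "(\<lambda>d. tinv (aval PS J (a(x:=d)) \<psi>)) = (\<lambda>d. tinv FF)"
      using False by (simp add: val)
    show ?thesis using False unfolding tr AEx_def by (simp only: aval.simps e lub_none if_False)
  qed
  have rhs: "dval S B (I A) a (DK t \<phi>) =
     (if A' \<in> agents S \<and> (\<forall>K\<in>fst B A'. dval S B K a \<phi> = TT) then TT
      else if A' \<notin> agents S \<or> (\<exists>K\<in>snd B A'. dval S B K a \<phi> = FF) then FF else UU)"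
    by (simp add: A'_def Let_def)
  show ?case
  proof (cases "A' \<in> agents S")
    case False
    then show ?thesis using lhs rhs unfolding PS_def J_def by simp
  next
    case True
    define g where "g = (\<lambda>J'. aval PS J' (a(x:=A')) \<chi>)"
    define h where "h = (\<lambda>K. dval S B K a \<phi>)"
    have gh: "g (tr_structure S I') = h (I' A')" if "\<forall>A\<in>agents S. is_struct S (I' A)" for I'
    proof -
      have "g (tr_structure S I') = dval S B (I' A') (a(x:=A')) \<phi>"
        unfolding g_def PS_def \<chi>_def using that True xn by (intro DK.IH) auto
      also have "\<dots> = h (I' A')" unfolding h_def using xn by (intro dval_cong) auto
      finally show ?thesis .
    qed
    have img1: "g ` tr_pws S (fst B) = h ` fst B A'"
      using ne1 True by (rule tr_pws_image) (use gh st1 in auto)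
    have img2: "g ` tr_pws S (snd B) = h ` snd B A'"
      using ne2 True by (rule tr_pws_image) (use gh st2 in auto)
    have c1: "(\<forall>J'\<in>tr_pws S (fst B). g J' = TT) = (\<forall>K\<in>fst B A'. h K = TT)"
    proof -
      have "(\<forall>J'\<in>tr_pws S (fst B). g J' = TT) = (\<forall>v\<in>g ` tr_pws S (fst B). v = TT)" by blast
      also have "\<dots> = (\<forall>v\<in>h ` fst B A'. v = TT)" by (simp only: img1)
      also have "\<dots> = (\<forall>K\<in>fst B A'. h K = TT)" by blast
      finally show ?thesis .
    qed
    have c2: "(\<exists>J'\<in>tr_pws S (snd B). g J' = FF) = (\<exists>K\<in>snd B A'. h K = FF)"
    proof -
      have "(\<exists>J'\<in>tr_pws S (snd B). g J' = FF) = (\<exists>v\<in>g ` tr_pws S (snd B). v = FF)" by blast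
      also have "\<dots> = (\<exists>v\<in>h ` snd B A'. v = FF)" by (simp only: img2)
      also have "\<dots> = (\<exists>K\<in>snd B A'. h K = FF)" by blast
      finally show ?thesis .
    qed
    have kv: "KV = (if (\<forall>J'\<in>tr_pws S (fst B). g J' = TT) then TT
                    else if (\<exists>J'\<in>tr_pws S (snd B). g J' = FF) then FF else UU)"
      by (simp add: KV_def g_def PS_def tr_bp_def)
    have "aval PS J a (tr_form S s (DK t \<phi>)) = dval S B (I A) a (DK t \<phi>)"
      using lhs rhs kv c1 c2 True by (simp add: h_def)
    then show ?thesis unfolding PS_def J_def .
  qed
qed


lemma key:
  assumes wf: "wf_setup S"
    and ne1: "\<forall>A\<in>agents S. fst B A \<noteq> {}" and ne2: "\<forall>A\<in>agents S. snd B A \<noteq> {}"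
    and st1: "\<forall>A\<in>agents S. \<forall>K\<in>fst B A. is_struct S K"
    and st2: "\<forall>A\<in>agents S. \<forall>K\<in>snd B A. is_struct S K"
    and J: "is_struct' S J"
  shows "atval (tr_bp S B) J (tr_theory S T) = glb (\<Union>A\<in>agents S. dsval S B (untr S J A) ` T A)"
proof -
  have Jeq: "tr_structure S (untr S J) = J" using tr_untr[OF J] .
  have e: "asval (tr_bp S B) J (tr_form S (Fn (agc S A) []) \<phi>) = dsval S B (untr S J A) \<phi>"
    if A: "A \<in> agents S" for A \<phi>
  proof -
    have ag: "agc S A \<notin> fsubj S" "farity S (agc S A) = 0" "iof S (agc S A) [] = A"
      using wf A unfolding wf_setup_def by auto
    have "fint J (agc S A) [] = iof S (agc S A) []"
      using J ag unfolding is_struct'_def by auto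
    then have te: "teval (tr_structure S (untr S J)) (\<lambda>_. undefined) (Fn (agc S A) []) = A"
      using ag by (simp add: Jeq)
    have "aval (tr_bp S B) (tr_structure S (untr S J)) (\<lambda>_. undefined) (tr_form S (Fn (agc S A) []) \<phi>)
          = dval S B (untr S J A) (\<lambda>_. undefined) \<phi>"
      by (rule main[OF wf ne1 ne2 st1 st2]) (use is_struct_untr[OF J] A te in auto)
    then show ?thesis unfolding asval_def dsval_def Jeq .
  qed
  have "asval (tr_bp S B) J ` tr_theory S T = (\<Union>A\<in>agents S. dsval S B (untr S J A) ` T A)"
    unfolding tr_theory_def image_UN image_image using e by (intro SUP_cong refl image_cong) auto
  then show ?thesis by (simp add: atval_def)
qed

theorem mainTheorem11:
  fixes S :: "('f,'p,'d) dsetup"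
    and T :: "'d \<Rightarrow> ('f,'p) dform set"
    and B :: "('f,'p,'d) dbp"
  assumes "wf_setup S"
    and "dist_theory S T"
    and "is_dbp S B"
    and "consistent_dbp S B"
    and "univ_consistent_dbp S B"
  shows "tr_bp S (Dstar S T B) = Astar S (tr_theory S T) (tr_bp S B)"
proof -
  note wf = assms(1)
  have ne2: "\<forall>A\<in>agents S. snd B A \<noteq> {}"
    using assms(5) unfolding univ_consistent_dbp_def univ_consistent_dpws_def by blast
  have ne1: "\<forall>A\<in>agents S. fst B A \<noteq> {}"
    using ne2 assms(4) unfolding consistent_dbp_def by blast
  have st1: "\<forall>A\<in>agents S. \<forall>K\<in>fst B A. is_struct S K"
    using assms(3) unfolding is_dbp_def by blast
  have st2: "\<forall>A\<in>agents S. \<forall>K\<in>snd B A. is_struct S K"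
    using assms(3) unfolding is_dbp_def by blast
  note k = key[OF wf ne1 ne2 st1 st2]
  have c1: "tr_pws S (\<lambda>A. {I. is_struct S I \<and> dtval S B I (T A) \<noteq> FF}) =
            {J. is_struct' S J \<and> atval (tr_bp S B) J (tr_theory S T) \<noteq> FF}"
  proof -
    have "tr_pws S (\<lambda>A. {I. is_struct S I \<and> dtval S B I (T A) \<noteq> FF}) =
          {J. is_struct' S J \<and> (\<forall>A\<in>agents S. dtval S B (untr S J A) (T A) \<noteq> FF)}"
      by (rule tr_pws_char[OF wf])
    also have "\<dots> = {J. is_struct' S J \<and> atval (tr_bp S B) J (tr_theory S T) \<noteq> FF}"
    proof (intro Collect_cong conj_cong refl)
      fix J assume "is_struct' S J"
      then show "(\<forall>A\<in>agents S. dtval S B (untr S J A) (T A) \<noteq> FF) = (atval (tr_bp S B) J (tr_theory S T) \<noteq> FF)"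
        by (simp add: k dtval_def glb_FF)
    qed
    finally show ?thesis .
  qed
  have c2: "tr_pws S (\<lambda>A. {I. is_struct S I \<and> dtval S B I (T A) = TT}) =
            {J. is_struct' S J \<and> atval (tr_bp S B) J (tr_theory S T) = TT}"
  proof -
    have "tr_pws S (\<lambda>A. {I. is_struct S I \<and> dtval S B I (T A) = TT}) =
          {J. is_struct' S J \<and> (\<forall>A\<in>agents S. dtval S B (untr S J A) (T A) = TT)}"
      by (rule tr_pws_char[OF wf])
    also have "\<dots> = {J. is_struct' S J \<and> atval (tr_bp S B) J (tr_theory S T) = TT}"
    proof (intro Collect_cong conj_cong refl)
      fix J assume "is_struct' S J"
      then show "(\<forall>A\<in>agents S. dtval S B (untr S J A) (T A) = TT) = (atval (tr_bp S B) J (tr_theory S T) = TT)"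
        by (simp add: k dtval_def glb_TT UN_subset_iff)
    qed
    finally show ?thesis .
  qed
  show ?thesis
    unfolding Dstar_def Astar_def using c1 c2 by (simp add: tr_bp_def)
qed

end
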